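(* Let $X$ be a noetherian topological space and $A,B\subseteq X$ two closed subspaces neither of which is contained in the other. Then: (1) $c(A\cup B)\le\dim(A\cap B)$; (2) if $A\cap B$ is irreducible then $c(A\cup B)\le c(A)$; (3) if $B$ is irreducible then $c(A\cup B)\ge\min\{c(A),\dim(A\cap B)\}$; (4) if $B$ and $A\cap B$ are irreducible then $c(A\cup B)=\min\{c(A),\dim(A\cap B)\}$.
   Context: For a noetherian topological space $T$, the connectedness dimension is $c(T)=\min\{\dim Z: Z\subseteq T\text{ closed and } T\setminus Z\text{ disconnected}\}$, where $\dim$ is Krull dimension of the topological space. *)

theory Defs
  imports "HOL-Analysis.Analysis" "HOL-Library.Extended_Real"
begin

definition noetherian_space :: "'a topology \<Rightarrow> bool" where
  "noetherian_space X \<longleftrightarrow>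
     \<not> (\<exists>f :: nat \<Rightarrow> 'a set. (\<forall>n. closedin X (f n)) \<and> (\<forall>n. f (Suc n) \<subset> f n))"

definition irreducible_space :: "'a topology \<Rightarrow> bool" where
  "irreducible_space X \<longleftrightarrow> topspace X \<noteq> {} \<and>
     (\<forall>C D. closedin X C \<longrightarrow> closedin X D \<longrightarrow> topspace X \<subseteq> C \<union> D \<longrightarrow>
        topspace X \<subseteq> C \<or> topspace X \<subseteq> D)"

definition irred_chain :: "'a topology \<Rightarrow> 'a set list \<Rightarrow> bool" where
  "irred_chain X zs \<longleftrightarrow> zs \<noteq> [] \<and> sorted_wrt (\<subset>) zs \<and>
     (\<forall>Z \<in> set zs. closedin X Z \<and> irreducible_space (subtopology X Z))"

definition krull_dim :: "'a topology \<Rightarrow> ereal" where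
  "krull_dim X = (if topspace X = {} then -1
     else (SUP zs \<in> {zs. irred_chain X zs}. ereal (real (length zs) - 1)))"

definition disconnected_space :: "'a topology \<Rightarrow> bool" where
  "disconnected_space X \<longleftrightarrow> topspace X = {} \<or> \<not> connected_space X"

definition conn_dim :: "'a topology \<Rightarrow> ereal" where
  "conn_dim T = (INF Z \<in> {Z. closedin T Z \<and> disconnected_space (subtopology T (topspace T - Z))}.
                    krull_dim (subtopology T Z))"

end

theory Submission
  imports Defs
begin

lemma disc_iff:
  assumes "W \<subseteq> topspace X"
  shows "disconnected_space (subtopology X W) \<longleftrightarrow> W = {} \<or>
    (\<exists>F1 F2. closedin X F1 \<and> closedin X F2 \<and> W \<subseteq> F1 \<union> F2 \<and> F1 \<inter> F2 \<inter> W = {}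
       \<and> F1 \<inter> W \<noteq> {} \<and> F2 \<inter> W \<noteq> {})"
proof -
  have ts: "topspace (subtopology X W) = W" using assms by auto
  have "connected_space (subtopology X W) \<longleftrightarrow> connectedin X W" using assms by (simp add: connectedin_def)
  then show ?thesis unfolding disconnected_space_def ts connectedin_closedin using assms by blast
qed

definition IS :: "'a topology \<Rightarrow> 'a set \<Rightarrow> 'a set set" where
  "IS X S = {Z. closedin X Z \<and> Z \<subseteq> S \<and> disconnected_space (subtopology X (S - Z))}"

lemma conn_dim_closed:
  assumes "closedin X S"
  shows "conn_dim (subtopology X S) = (INF Z\<in>IS X S. krull_dim (subtopology X Z))"
proof -
  have ts: "topspace (subtopology X S) = S"
    using closedin_subset[OF assms] by auto
  have e: "{Z. closedin (subtopology X S) Z \<and> disconnected_space (subtopology (subtopology X S) (S - Z))}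
     = IS X S"
  proof (rule set_eqI)
    fix Z
    have "S \<inter> (S - Z) = S - Z" by blast
    then show "Z \<in> {Z. closedin (subtopology X S) Z \<and> disconnected_space (subtopology (subtopology X S) (S - Z))} \<longleftrightarrow> Z \<in> IS X S"
      by (simp add: IS_def subtopology_subtopology closedin_closed_subtopology[OF assms])
  qed
  show ?thesis unfolding conn_dim_def ts e subtopology_subtopology
  proof (rule INF_cong)
    fix Z assume "Z \<in> IS X S"
    then have "S \<inter> Z = Z" by (auto simp: IS_def)
    then show "krull_dim (subtopology X (S \<inter> Z)) = krull_dim (subtopology X Z)" by simp
  qed (rule e[unfolded subtopology_subtopology])
qed

lemma exists_irred:
  assumes N: "noetherian_space X" and T: "closedin X T" "T \<noteq> {}"
  shows "\<exists>W. closedin X W \<and> W \<subseteq> T \<and> irreducible_space (subtopology X W)"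
proof (rule ccontr)
  assume H: "\<not> ?thesis"
  define P where "P = (\<lambda>S. closedin X S \<and> S \<noteq> {} \<and> S \<subseteq> T)"
  have step: "\<exists>S'. P S' \<and> S' \<subset> S" if "P S" for S
  proof -
    have S: "closedin X S" "S \<noteq> {}" "S \<subseteq> T" using that by (auto simp: P_def)
    have ts: "topspace (subtopology X S) = S" using closedin_subset[OF S(1)] by auto
    have "\<not> irreducible_space (subtopology X S)" using H S by blast
    then obtain C D where CD: "closedin (subtopology X S) C" "closedin (subtopology X S) D"
      "S \<subseteq> C \<union> D" "\<not> S \<subseteq> C" "\<not> S \<subseteq> D"
      unfolding irreducible_space_def ts using S by blast
    have C: "closedin X C" "C \<subseteq> S" using CD closedin_closed_subtopology[OF S(1)] by auto
    have "C \<noteq> {}" using CD by auto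
    thus ?thesis using C CD S unfolding P_def by blast
  qed
  define f where "f = rec_nat T (\<lambda>_ S. SOME S'. P S' \<and> S' \<subset> S)"
  have f0: "f 0 = T" and fS: "\<And>n. f (Suc n) = (SOME S'. P S' \<and> S' \<subset> f n)" by (simp_all add: f_def)
  have Pf: "P (f n)" for n
  proof (induction n)
    case 0 then show ?case using T by (simp add: f0 P_def)
  next
    case (Suc n)
    have "\<exists>S'. P S' \<and> S' \<subset> f n" using step Suc.IH by blast
    then have "P (SOME S'. P S' \<and> S' \<subset> f n) \<and> (SOME S'. P S' \<and> S' \<subset> f n) \<subset> f n" by (rule someI_ex)
    then show ?case unfolding fS by blast
  qed
  have "f (Suc n) \<subset> f n" for n
  proof -
    have "\<exists>S'. P S' \<and> S' \<subset> f n" using step Pf by blast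
    then have "P (SOME S'. P S' \<and> S' \<subset> f n) \<and> (SOME S'. P S' \<and> S' \<subset> f n) \<subset> f n" by (rule someI_ex)
    then show ?thesis unfolding fS by blast
  qed
  moreover have "closedin X (f n)" for n using Pf[of n] by (simp add: P_def)
  ultimately show False using N unfolding noetherian_space_def by blast
qed

lemma krull_mono:
  assumes N: "noetherian_space X" and S: "closedin X S" and T: "closedin X T" and ST: "S \<subseteq> T"
  shows "krull_dim (subtopology X S) \<le> krull_dim (subtopology X T)"
proof (cases "S = {}")
  case True
  show ?thesis
  proof (cases "T = {}")
    case True then show ?thesis using \<open>S = {}\<close> by simp
  next
    case False
    then obtain W where W: "closedin X W" "W \<subseteq> T" "irreducible_space (subtopology X W)"
      using exists_irred[OF N T] by blast
    have ch: "irred_chain (subtopology X T) [W]"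
      unfolding irred_chain_def using W closedin_subset_topspace[OF W(1) W(2)]
      by (simp add: subtopology_subtopology Int_absorb1)
    have tsT: "topspace (subtopology X T) = T" using closedin_subset[OF T] by auto
    have "ereal (real (length [W]) - 1) \<le> (SUP zs\<in>{zs. irred_chain (subtopology X T) zs}. ereal (real (length zs) - 1))"
      by (rule SUP_upper) (use ch in simp)
    then have "0 \<le> krull_dim (subtopology X T)" unfolding krull_dim_def tsT using False by (simp add: zero_ereal_def[symmetric])
    moreover have "krull_dim (subtopology X S) = -1" using True by (simp add: krull_dim_def)
    moreover have "(-1::ereal) \<le> 0" by simp
    ultimately show ?thesis by (metis order.trans)
  qed
next
  case False
  have tsS: "topspace (subtopology X S) = S" using closedin_subset[OF S] by auto
  have tsT: "topspace (subtopology X T) = T" using closedin_subset[OF T] by auto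
  have sub: "{zs. irred_chain (subtopology X S) zs} \<subseteq> {zs. irred_chain (subtopology X T) zs}"
  proof safe
    fix zs assume "irred_chain (subtopology X S) zs"
    then show "irred_chain (subtopology X T) zs"
      unfolding irred_chain_def closedin_closed_subtopology[OF S] closedin_closed_subtopology[OF T]
        subtopology_subtopology using ST
      by (auto simp: Int_absorb1)
  qed
  show ?thesis unfolding krull_dim_def tsS tsT using False ST
    by (auto intro!: SUP_subset_mono[OF sub])
qed

lemma irr_split:
  assumes "irreducible_space (subtopology X S)" "S \<subseteq> topspace X"
    "closedin X C" "closedin X D" "S \<subseteq> C \<union> D"
  shows "S \<subseteq> C \<or> S \<subseteq> D"
proof -
  have ts: "topspace (subtopology X S) = S" using assms(2) by auto
  have "closedin (subtopology X S) (C \<inter> S)" "closedin (subtopology X S) (D \<inter> S)"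
    using assms(3,4) closedin_subtopology by blast+
  moreover have "S \<subseteq> (C \<inter> S) \<union> (D \<inter> S)" using assms(5) by blast
  ultimately have "S \<subseteq> C \<inter> S \<or> S \<subseteq> D \<inter> S"
    using assms(1) unfolding irreducible_space_def ts by blast
  then show ?thesis by blast
qed

lemma sep2:
  assumes "closedin X A" "closedin X B" "closedin X F1" "closedin X F2"
    "A - Z \<subseteq> F1 \<union> F2" "F1 \<inter> F2 \<inter> (A - Z) = {}" "F1 \<inter> (A - Z) \<noteq> {}" "F2 \<inter> (A - Z) \<noteq> {}"
    "A \<inter> B \<subseteq> F1 \<union> Z"
  shows "disconnected_space (subtopology X ((A \<union> B) - Z))"
proof -
  have tx: "(A \<union> B) - Z \<subseteq> topspace X" using assms(1,2) closedin_subset by blast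
  have c1: "closedin X ((F1 \<inter> A) \<union> B)" "closedin X (F2 \<inter> A)"
    using assms(1-4) by (auto intro: closedin_Int closedin_Un)
  have "(A \<union> B) - Z \<subseteq> ((F1 \<inter> A) \<union> B) \<union> (F2 \<inter> A)" using assms(5) by blast
  moreover have "((F1 \<inter> A) \<union> B) \<inter> (F2 \<inter> A) \<inter> ((A \<union> B) - Z) = {}" using assms(6,9) by blast
  moreover have "((F1 \<inter> A) \<union> B) \<inter> ((A \<union> B) - Z) \<noteq> {}" using assms(7) by blast
  moreover have "(F2 \<inter> A) \<inter> ((A \<union> B) - Z) \<noteq> {}" using assms(8) by blast
  ultimately show ?thesis unfolding disc_iff[OF tx] using c1 by blast
qed

lemma sep3:
  assumes "closedin X A" "closedin X B" "closedin X F1" "closedin X F2"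
    "(A \<union> B) - Z \<subseteq> F1 \<union> F2" "F1 \<inter> F2 \<inter> ((A \<union> B) - Z) = {}"
    "F2 \<inter> ((A \<union> B) - Z) \<noteq> {}"
    "B \<subseteq> F1 \<union> Z" "\<not> A \<inter> B \<subseteq> Z"
  shows "disconnected_space (subtopology X (A - Z \<inter> A))"
proof -
  have tx: "A - Z \<inter> A \<subseteq> topspace X" using assms(1) closedin_subset by blast
  have "A - Z \<inter> A \<subseteq> F1 \<union> F2" using assms(5) by blast
  moreover have "F1 \<inter> F2 \<inter> (A - Z \<inter> A) = {}" using assms(6) by blast
  moreover have "F1 \<inter> (A - Z \<inter> A) \<noteq> {}" using assms(8,9) by blast
  moreover have "F2 \<inter> (A - Z \<inter> A) \<noteq> {}" using assms(6,7,8) by blast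
  ultimately show ?thesis unfolding disc_iff[OF tx] using assms(3,4) by blast
qed

theorem mainTheorem10:
  fixes X :: "'a topology" and A B :: "'a set"
  assumes "noetherian_space X"
    and "closedin X A" and "closedin X B"
    and "\<not> A \<subseteq> B" and "\<not> B \<subseteq> A"
  shows "conn_dim (subtopology X (A \<union> B)) \<le> krull_dim (subtopology X (A \<inter> B))
    \<and> (irreducible_space (subtopology X (A \<inter> B)) \<longrightarrow>
           conn_dim (subtopology X (A \<union> B)) \<le> conn_dim (subtopology X A))
    \<and> (irreducible_space (subtopology X B) \<longrightarrow>
           min (conn_dim (subtopology X A)) (krull_dim (subtopology X (A \<inter> B)))
             \<le> conn_dim (subtopology X (A \<union> B)))
    \<and> (irreducible_space (subtopology X B) \<and> irreducible_space (subtopology X (A \<inter> B)) \<longrightarrow>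
           conn_dim (subtopology X (A \<union> B)) =
             min (conn_dim (subtopology X A)) (krull_dim (subtopology X (A \<inter> B))))"
proof -
  note N = assms(1) and cA = assms(2) and cB = assms(3)
  have cU: "closedin X (A \<union> B)" using cA cB by (rule closedin_Un)
  have cI: "closedin X (A \<inter> B)" using cA cB by (rule closedin_Int)
  have tA: "A \<subseteq> topspace X" and tB: "B \<subseteq> topspace X" using cA cB closedin_subset by blast+
  note cdU = conn_dim_closed[OF cU] and cdA = conn_dim_closed[OF cA]
  have P1: "conn_dim (subtopology X (A \<union> B)) \<le> krull_dim (subtopology X (A \<inter> B))"
  proof -
    have tx: "(A \<union> B) - A \<inter> B \<subseteq> topspace X" using tA tB by blast
    have "disconnected_space (subtopology X ((A \<union> B) - A \<inter> B))"
      unfolding disc_iff[OF tx] using cA cB assms(4,5) by blast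
    then have "A \<inter> B \<in> IS X (A \<union> B)" using cI unfolding IS_def by blast
    then show ?thesis unfolding cdU by (rule INF_lower)
  qed
  have P2: "conn_dim (subtopology X (A \<union> B)) \<le> conn_dim (subtopology X A)"
    if irr: "irreducible_space (subtopology X (A \<inter> B))"
    unfolding cdU cdA
  proof (rule INF_mono)
    fix Z assume Z: "Z \<in> IS X A"
    then have cZ: "closedin X Z" and ZA: "Z \<subseteq> A" and dZ: "disconnected_space (subtopology X (A - Z))"
      unfolding IS_def by auto
    have tx: "A - Z \<subseteq> topspace X" using tA by blast
    show "\<exists>Z'\<in>IS X (A \<union> B). krull_dim (subtopology X Z') \<le> krull_dim (subtopology X Z)"
    proof (cases "A - Z = {}")
      case True
      then have "Z = A" using ZA by blast
      moreover have "A \<inter> B \<in> IS X (A \<union> B)"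
      proof -
        have tx: "(A \<union> B) - A \<inter> B \<subseteq> topspace X" using tA tB by blast
        have "disconnected_space (subtopology X ((A \<union> B) - A \<inter> B))"
          unfolding disc_iff[OF tx] using cA cB assms(4,5) by blast
        then show ?thesis using cI unfolding IS_def by blast
      qed
      moreover have "krull_dim (subtopology X (A \<inter> B)) \<le> krull_dim (subtopology X A)"
        using krull_mono[OF N cI cA] by blast
      ultimately show ?thesis by blast
    next
      case False
      then obtain F1 F2 where F: "closedin X F1" "closedin X F2" "A - Z \<subseteq> F1 \<union> F2"
        "F1 \<inter> F2 \<inter> (A - Z) = {}" "F1 \<inter> (A - Z) \<noteq> {}" "F2 \<inter> (A - Z) \<noteq> {}"
        using dZ unfolding disc_iff[OF tx] by blast
      have "A \<inter> B \<subseteq> (F1 \<union> Z) \<union> (F2 \<union> Z)" using F(3) by blast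
      then have "A \<inter> B \<subseteq> F1 \<union> Z \<or> A \<inter> B \<subseteq> F2 \<union> Z"
        using irr_split[OF irr _ closedin_Un[OF F(1) cZ] closedin_Un[OF F(2) cZ]] tA by blast
      then have "disconnected_space (subtopology X ((A \<union> B) - Z))"
      proof
        assume "A \<inter> B \<subseteq> F1 \<union> Z"
        then show ?thesis using sep2[OF cA cB F(1,2,3,4,5,6)] by blast
      next
        assume h: "A \<inter> B \<subseteq> F2 \<union> Z"
        have "F2 \<inter> F1 \<inter> (A - Z) = {}" "A - Z \<subseteq> F2 \<union> F1" using F by blast+
        then show ?thesis using sep2[OF cA cB F(2,1) _ _ F(6,5) h] by blast
      qed
      then have "Z \<in> IS X (A \<union> B)" using cZ ZA unfolding IS_def by blast
      then show ?thesis by blast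
    qed
  qed
  have P3: "min (conn_dim (subtopology X A)) (krull_dim (subtopology X (A \<inter> B)))
             \<le> conn_dim (subtopology X (A \<union> B))"
    if irrB: "irreducible_space (subtopology X B)"
    unfolding cdU
  proof (rule INF_greatest)
    fix Z assume Z: "Z \<in> IS X (A \<union> B)"
    then have cZ: "closedin X Z" and ZU: "Z \<subseteq> A \<union> B"
      and dZ: "disconnected_space (subtopology X ((A \<union> B) - Z))"
      unfolding IS_def by auto
    have tx: "(A \<union> B) - Z \<subseteq> topspace X" using tA tB by blast
    show "min (conn_dim (subtopology X A)) (krull_dim (subtopology X (A \<inter> B)))
           \<le> krull_dim (subtopology X Z)"
    proof (cases "A \<inter> B \<subseteq> Z")
      case True
      have "krull_dim (subtopology X (A \<inter> B)) \<le> krull_dim (subtopology X Z)"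
        using krull_mono[OF N cI cZ True] .
      then show ?thesis by (meson min.cobounded2 order.trans)
    next
      case False
      then have "(A \<union> B) - Z \<noteq> {}" by blast
      then obtain F1 F2 where F: "closedin X F1" "closedin X F2" "(A \<union> B) - Z \<subseteq> F1 \<union> F2"
        "F1 \<inter> F2 \<inter> ((A \<union> B) - Z) = {}" "F1 \<inter> ((A \<union> B) - Z) \<noteq> {}" "F2 \<inter> ((A \<union> B) - Z) \<noteq> {}"
        using dZ unfolding disc_iff[OF tx] by blast
      have "B \<subseteq> (F1 \<union> Z) \<union> (F2 \<union> Z)" using F(3) by blast
      then have "B \<subseteq> F1 \<union> Z \<or> B \<subseteq> F2 \<union> Z"
        using irr_split[OF irrB tB closedin_Un[OF F(1) cZ] closedin_Un[OF F(2) cZ]] by blast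
      then have dA: "disconnected_space (subtopology X (A - Z \<inter> A))"
      proof
        assume "B \<subseteq> F1 \<union> Z"
        then show ?thesis using sep3[OF cA cB F(1,2,3,4,6) _ False] by blast
      next
        assume h: "B \<subseteq> F2 \<union> Z"
        have "F2 \<inter> F1 \<inter> ((A \<union> B) - Z) = {}" "(A \<union> B) - Z \<subseteq> F2 \<union> F1" using F by blast+
        then show ?thesis using sep3[OF cA cB F(2,1) _ _ F(5) h False] by blast
      qed
      have cZA: "closedin X (Z \<inter> A)" using cZ cA by (rule closedin_Int)
      then have "Z \<inter> A \<in> IS X A" using dA unfolding IS_def by blast
      then have "conn_dim (subtopology X A) \<le> krull_dim (subtopology X (Z \<inter> A))"
        unfolding cdA by (rule INF_lower)
      also have "\<dots> \<le> krull_dim (subtopology X Z)" using krull_mono[OF N cZA cZ] by blast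
      finally show ?thesis by (meson min.cobounded1 order.trans)
    qed
  qed
  show ?thesis
  proof (intro conjI impI)
    show "conn_dim (subtopology X (A \<union> B)) \<le> krull_dim (subtopology X (A \<inter> B))" by (rule P1)
  next
    assume "irreducible_space (subtopology X (A \<inter> B))"
    then show "conn_dim (subtopology X (A \<union> B)) \<le> conn_dim (subtopology X A)" by (rule P2)
  next
    assume "irreducible_space (subtopology X B)"
    then show "min (conn_dim (subtopology X A)) (krull_dim (subtopology X (A \<inter> B)))
             \<le> conn_dim (subtopology X (A \<union> B))" by (rule P3)
  next
    assume h: "irreducible_space (subtopology X B) \<and> irreducible_space (subtopology X (A \<inter> B))"
    then show "conn_dim (subtopology X (A \<union> B)) =
             min (conn_dim (subtopology X A)) (krull_dim (subtopology X (A \<inter> B)))"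
      using P1 P2 P3 by (meson antisym min.boundedI)
  qed
qed

end
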